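(* Let $\mathcal B$ be an extriangulated category with enough projectives and enough injectives, and let $(\mathcal C,\mathcal C^{\perp_1})$ be a cotorsion pair with $\mathcal C$ rigid, with heart $\mathcal H/\mathcal C$. Let $g:A\twoheadrightarrow B$ be a deflation with $A,B\in\mathcal H$ such that $\overline g$ is an epimorphism in $\mathcal H/\mathcal C$. Then for every $X\in\Omega\mathcal C$ the map $\operatorname{Hom}_{\mathcal B}(X,g):\operatorname{Hom}_{\mathcal B}(X,A)\to\operatorname{Hom}_{\mathcal B}(X,B)$ is surjective.
   Context: $(\mathcal B,\mathbb E,\mathfrak s)$ is an extriangulated category (Nakaoka–Palu); conflations $A\rightarrowtail B\twoheadrightarrow C$. Subcategories are full, additive, closed under isomorphisms and finite direct sums. $\mathcal P$ = projectives; $\mathcal C^{\perp_1}=\{B\mid\mathbb E(\mathcal C,B)=0\}$; $\mathcal C$ rigid means $\mathbb E(\mathcal C,\mathcal C)=0$. $\Omega\mathcal C$ is the class of objects $U$ admitting a conflation $U\rightarrowtail P\twoheadrightarrow C$ with $P\in\mathcal P$, $C\in\mathcal C$. For a cotorsion pair $(\mathcal U,\mathcal V)$ (summand-closed, $\mathbb E(\mathcal U,\mathcal V)=0$, every $B$ admits conflations $V_B\rightarrowtail U_B\twoheadrightarrow B$, $B\rightarrowtail V^B\twoheadrightarrow U^B$ with $U$'s in $\mathcal U$, $V$'s in $\mathcal V$), $\mathcal H$ is the subcategory of objects admitting such conflations with $U_B,V^B\in\mathcal U\cap\mathcal V$, and the heart is the ideal quotient $\mathcal H/(\mathcal U\cap\mathcal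 V)$, which is abelian; here $\mathcal U\cap\mathcal V=\mathcal C$. $\overline g$ is the image of $g$ in the heart. *)

theory Defs
  imports Main
begin

text \<open>
  Objects are all elements of type 'o, morphisms live in 'm, extensions in 'e.
  Hom X Y is the set of morphisms X -> Y; Cmp g f is the composite g o f.
  Ext C A is the abelian group E(C,A); Push a d = a_* d, Pull c d = c^* d.
  Real A B C x y d means: the sequence A -x-> B -y-> C belongs to s(d), d in E(C,A).
\<close>

record ('o,'m,'e) ecat =
  Hom   :: "'o \<Rightarrow> 'o \<Rightarrow> 'm set"
  Cmp   :: "'m \<Rightarrow> 'm \<Rightarrow> 'm"
  Idn   :: "'o \<Rightarrow> 'm"
  MAdd  :: "'m \<Rightarrow> 'm \<Rightarrow> 'm"
  MZero :: "'o \<Rightarrow> 'o \<Rightarrow> 'm"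
  MNeg  :: "'m \<Rightarrow> 'm"
  Ext   :: "'o \<Rightarrow> 'o \<Rightarrow> 'e set"
  EAdd  :: "'e \<Rightarrow> 'e \<Rightarrow> 'e"
  EZero :: "'o \<Rightarrow> 'o \<Rightarrow> 'e"
  ENeg  :: "'e \<Rightarrow> 'e"
  Push  :: "'m \<Rightarrow> 'e \<Rightarrow> 'e"
  Pull  :: "'m \<Rightarrow> 'e \<Rightarrow> 'e"
  Real  :: "'o \<Rightarrow> 'o \<Rightarrow> 'o \<Rightarrow> 'm \<Rightarrow> 'm \<Rightarrow> 'e \<Rightarrow> bool"

definition is_zero_obj :: "('o,'m,'e) ecat \<Rightarrow> 'o \<Rightarrow> bool" where
  "is_zero_obj E Z \<longleftrightarrow> (\<forall>A. Hom E A Z = {MZero E A Z} \<and> Hom E Z A = {MZero E Z A})"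

definition is_biprod :: "('o,'m,'e) ecat \<Rightarrow> 'o \<Rightarrow> 'o \<Rightarrow> 'o \<Rightarrow> 'm \<Rightarrow> 'm \<Rightarrow> 'm \<Rightarrow> 'm \<Rightarrow> bool" where
  "is_biprod E S A B i1 i2 p1 p2 \<longleftrightarrow>
     i1 \<in> Hom E A S \<and> i2 \<in> Hom E B S \<and> p1 \<in> Hom E S A \<and> p2 \<in> Hom E S B \<and>
     Cmp E p1 i1 = Idn E A \<and> Cmp E p2 i2 = Idn E B \<and>
     Cmp E p2 i1 = MZero E A B \<and> Cmp E p1 i2 = MZero E B A \<and>
     MAdd E (Cmp E i1 p1) (Cmp E i2 p2) = Idn E S"

definition is_iso :: "('o,'m,'e) ecat \<Rightarrow> 'm \<Rightarrow> 'o \<Rightarrow> 'o \<Rightarrow> bool" where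
  "is_iso E b X Y \<longleftrightarrow> b \<in> Hom E X Y \<and>
     (\<exists>b' \<in> Hom E Y X. Cmp E b' b = Idn E X \<and> Cmp E b b' = Idn E Y)"

definition additive_cat :: "('o,'m,'e) ecat \<Rightarrow> bool" where
  "additive_cat E \<longleftrightarrow>
    (\<forall>A B A' B' f. f \<in> Hom E A B \<longrightarrow> f \<in> Hom E A' B' \<longrightarrow> A = A' \<and> B = B') \<and>
    (\<forall>A B D f g. f \<in> Hom E A B \<longrightarrow> g \<in> Hom E B D \<longrightarrow> Cmp E g f \<in> Hom E A D) \<and>
    (\<forall>A B D F f g h. f \<in> Hom E A B \<longrightarrow> g \<in> Hom E B D \<longrightarrow> h \<in> Hom E D F \<longrightarrow>
        Cmp E h (Cmp E g f) = Cmp E (Cmp E h g) f) \<and>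
    (\<forall>A. Idn E A \<in> Hom E A A) \<and>
    (\<forall>A B f. f \<in> Hom E A B \<longrightarrow> Cmp E f (Idn E A) = f \<and> Cmp E (Idn E B) f = f) \<and>
    (\<forall>A B. MZero E A B \<in> Hom E A B \<and>
       (\<forall>f \<in> Hom E A B. \<forall>g \<in> Hom E A B. MAdd E f g \<in> Hom E A B \<and> MAdd E f g = MAdd E g f) \<and>
       (\<forall>f \<in> Hom E A B. \<forall>g \<in> Hom E A B. \<forall>h \<in> Hom E A B.
           MAdd E (MAdd E f g) h = MAdd E f (MAdd E g h)) \<and>
       (\<forall>f \<in> Hom E A B. MNeg E f \<in> Hom E A B \<and> MAdd E f (MZero E A B) = f \<and>
           MAdd E f (MNeg E f) = MZero E A B)) \<and>
    (\<forall>A B D f1 f2 g. f1 \<in> Hom E A B \<longrightarrow> f2 \<in> Hom E A B \<longrightarrow> g \<in> Hom E B D \<longrightarrow>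
        Cmp E g (MAdd E f1 f2) = MAdd E (Cmp E g f1) (Cmp E g f2)) \<and>
    (\<forall>A B D f g1 g2. f \<in> Hom E A B \<longrightarrow> g1 \<in> Hom E B D \<longrightarrow> g2 \<in> Hom E B D \<longrightarrow>
        Cmp E (MAdd E g1 g2) f = MAdd E (Cmp E g1 f) (Cmp E g2 f)) \<and>
    (\<exists>Z. is_zero_obj E Z) \<and>
    (\<forall>A B. \<exists>S i1 i2 p1 p2. is_biprod E S A B i1 i2 p1 p2)"

definition biadditive_ext :: "('o,'m,'e) ecat \<Rightarrow> bool" where
  "biadditive_ext E \<longleftrightarrow>
    (\<forall>C A C' A' d. d \<in> Ext E C A \<longrightarrow> d \<in> Ext E C' A' \<longrightarrow> C = C' \<and> A = A') \<and>
    (\<forall>C A. EZero E C A \<in> Ext E C A \<and>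
       (\<forall>d \<in> Ext E C A. \<forall>e \<in> Ext E C A. EAdd E d e \<in> Ext E C A \<and> EAdd E d e = EAdd E e d) \<and>
       (\<forall>d \<in> Ext E C A. \<forall>e \<in> Ext E C A. \<forall>f \<in> Ext E C A.
           EAdd E (EAdd E d e) f = EAdd E d (EAdd E e f)) \<and>
       (\<forall>d \<in> Ext E C A. ENeg E d \<in> Ext E C A \<and> EAdd E d (EZero E C A) = d \<and>
           EAdd E d (ENeg E d) = EZero E C A)) \<and>
    (\<forall>C A A' a d. a \<in> Hom E A A' \<longrightarrow> d \<in> Ext E C A \<longrightarrow> Push E a d \<in> Ext E C A') \<and>
    (\<forall>C C' A c d. c \<in> Hom E C' C \<longrightarrow> d \<in> Ext E C A \<longrightarrow> Pull E c d \<in> Ext E C' A) \<and>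
    (\<forall>C A d. d \<in> Ext E C A \<longrightarrow> Push E (Idn E A) d = d \<and> Pull E (Idn E C) d = d) \<and>
    (\<forall>C A A' A'' a a' d. a \<in> Hom E A A' \<longrightarrow> a' \<in> Hom E A' A'' \<longrightarrow> d \<in> Ext E C A \<longrightarrow>
        Push E (Cmp E a' a) d = Push E a' (Push E a d)) \<and>
    (\<forall>C C' C'' A c c' d. c \<in> Hom E C' C \<longrightarrow> c' \<in> Hom E C'' C' \<longrightarrow> d \<in> Ext E C A \<longrightarrow>
        Pull E (Cmp E c c') d = Pull E c' (Pull E c d)) \<and>
    (\<forall>C C' A A' a c d. a \<in> Hom E A A' \<longrightarrow> c \<in> Hom E C' C \<longrightarrow> d \<in> Ext E C A \<longrightarrow>
        Push E a (Pull E c d) = Pull E c (Push E a d)) \<and>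
    (\<forall>C A A' a d e. a \<in> Hom E A A' \<longrightarrow> d \<in> Ext E C A \<longrightarrow> e \<in> Ext E C A \<longrightarrow>
        Push E a (EAdd E d e) = EAdd E (Push E a d) (Push E a e)) \<and>
    (\<forall>C A A' a1 a2 d. a1 \<in> Hom E A A' \<longrightarrow> a2 \<in> Hom E A A' \<longrightarrow> d \<in> Ext E C A \<longrightarrow>
        Push E (MAdd E a1 a2) d = EAdd E (Push E a1 d) (Push E a2 d)) \<and>
    (\<forall>C C' A c d e. c \<in> Hom E C' C \<longrightarrow> d \<in> Ext E C A \<longrightarrow> e \<in> Ext E C A \<longrightarrow>
        Pull E c (EAdd E d e) = EAdd E (Pull E c d) (Pull E c e)) \<and>
    (\<forall>C C' A c1 c2 d. c1 \<in> Hom E C' C \<longrightarrow> c2 \<in> Hom E C' C \<longrightarrow> d \<in> Ext E C A \<longrightarrow>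
        Pull E (MAdd E c1 c2) d = EAdd E (Pull E c1 d) (Pull E c2 d))"

text \<open>The realization s: each d in E(C,A) is assigned an equivalence class of sequences
  A -> B -> C (axioms (ET2) of Nakaoka--Palu, additive realization).\<close>
definition realization_ax :: "('o,'m,'e) ecat \<Rightarrow> bool" where
  "realization_ax E \<longleftrightarrow>
    (\<forall>A B C x y d. Real E A B C x y d \<longrightarrow>
        d \<in> Ext E C A \<and> x \<in> Hom E A B \<and> y \<in> Hom E B C) \<and>
    (\<forall>A C d. d \<in> Ext E C A \<longrightarrow> (\<exists>B x y. Real E A B C x y d)) \<and>
    (\<forall>A B C x y d. Real E A B C x y d \<longrightarrow>
        (\<forall>B' x' y'. Real E A B' C x' y' d \<longleftrightarrow>
            (\<exists>b. is_iso E b B B' \<and> Cmp E b x = x' \<and> Cmp E y' b = y))) \<and>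
    (\<forall>A B C x y d A' B' C' x' y' d' a c.
        Real E A B C x y d \<longrightarrow> Real E A' B' C' x' y' d' \<longrightarrow>
        a \<in> Hom E A A' \<longrightarrow> c \<in> Hom E C C' \<longrightarrow> Push E a d = Pull E c d' \<longrightarrow>
        (\<exists>b \<in> Hom E B B'. Cmp E b x = Cmp E x' a \<and> Cmp E y' b = Cmp E c y)) \<and>
    (\<forall>S A C i1 i2 p1 p2. is_biprod E S A C i1 i2 p1 p2 \<longrightarrow>
        Real E A S C i1 p2 (EZero E C A)) \<and>
    (\<forall>A B C x y d A' B' C' x' y' d'
        SA ia1 ia2 pa1 pa2 SB ib1 ib2 pb1 pb2 SC ic1 ic2 pc1 pc2.
        Real E A B C x y d \<longrightarrow> Real E A' B' C' x' y' d' \<longrightarrow>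
        is_biprod E SA A A' ia1 ia2 pa1 pa2 \<longrightarrow>
        is_biprod E SB B B' ib1 ib2 pb1 pb2 \<longrightarrow>
        is_biprod E SC C C' ic1 ic2 pc1 pc2 \<longrightarrow>
        Real E SA SB SC
          (MAdd E (Cmp E ib1 (Cmp E x pa1)) (Cmp E ib2 (Cmp E x' pa2)))
          (MAdd E (Cmp E ic1 (Cmp E y pb1)) (Cmp E ic2 (Cmp E y' pb2)))
          (EAdd E (Push E ia1 (Pull E pc1 d)) (Push E ia2 (Pull E pc2 d'))))"

definition ET3_ax :: "('o,'m,'e) ecat \<Rightarrow> bool" where
  "ET3_ax E \<longleftrightarrow>
    (\<forall>A B C x y d A' B' C' x' y' d' a b.
        Real E A B C x y d \<longrightarrow> Real E A' B' C' x' y' d' \<longrightarrow>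
        a \<in> Hom E A A' \<longrightarrow> b \<in> Hom E B B' \<longrightarrow> Cmp E b x = Cmp E x' a \<longrightarrow>
        (\<exists>c \<in> Hom E C C'. Cmp E c y = Cmp E y' b \<and> Push E a d = Pull E c d')) \<and>
    (\<forall>A B C x y d A' B' C' x' y' d' b c.
        Real E A B C x y d \<longrightarrow> Real E A' B' C' x' y' d' \<longrightarrow>
        b \<in> Hom E B B' \<longrightarrow> c \<in> Hom E C C' \<longrightarrow> Cmp E c y = Cmp E y' b \<longrightarrow>
        (\<exists>a \<in> Hom E A A'. Cmp E b x = Cmp E x' a \<and> Push E a d = Pull E c d'))"

definition ET4_ax :: "('o,'m,'e) ecat \<Rightarrow> bool" where
  "ET4_ax E \<longleftrightarrow>
    (\<forall>A B C D F f f' g g' d d'.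
        Real E A B D f f' d \<longrightarrow> Real E B C F g g' d' \<longrightarrow>
        (\<exists>X h' dd e d''.
           Real E A C X (Cmp E g f) h' d'' \<and>
           Real E D X F dd e (Push E f' d') \<and>
           Pull E dd d'' = d \<and> Push E f d'' = Pull E e d' \<and>
           Cmp E h' g = Cmp E dd f' \<and> Cmp E e h' = g')) \<and>
    (\<forall>A B C D F f f' g g' d d'.
        Real E D B A f' f d \<longrightarrow> Real E F C B g' g d' \<longrightarrow>
        (\<exists>X h' dd e d''.
           Real E X C A h' (Cmp E f g) d'' \<and>
           Real E F X D e dd (Pull E f' d') \<and>
           Push E dd d'' = d \<and> Pull E f d'' = Push E e d' \<and>
           Cmp E g h' = Cmp E f' dd \<and> Cmp E h' e = g'))"

definition extriangulated :: "('o,'m,'e) ecat \<Rightarrow> bool" where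
  "extriangulated E \<longleftrightarrow> additive_cat E \<and> biadditive_ext E \<and> realization_ax E \<and>
     ET3_ax E \<and> ET4_ax E"

definition conflation :: "('o,'m,'e) ecat \<Rightarrow> 'o \<Rightarrow> 'o \<Rightarrow> 'o \<Rightarrow> 'm \<Rightarrow> 'm \<Rightarrow> bool" where
  "conflation E A B C x y \<longleftrightarrow> (\<exists>d. Real E A B C x y d)"

definition deflation :: "('o,'m,'e) ecat \<Rightarrow> 'o \<Rightarrow> 'o \<Rightarrow> 'm \<Rightarrow> bool" where
  "deflation E A B g \<longleftrightarrow> (\<exists>K x. conflation E K A B x g)"

definition projective :: "('o,'m,'e) ecat \<Rightarrow> 'o \<Rightarrow> bool" where
  "projective E P \<longleftrightarrow> (\<forall>A B C x y c. conflation E A B C x y \<longrightarrow> c \<in> Hom E P C \<longrightarrow>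
      (\<exists>b \<in> Hom E P B. Cmp E y b = c))"

definition injective :: "('o,'m,'e) ecat \<Rightarrow> 'o \<Rightarrow> bool" where
  "injective E I \<longleftrightarrow> (\<forall>A B C x y a. conflation E A B C x y \<longrightarrow> a \<in> Hom E A I \<longrightarrow>
      (\<exists>b \<in> Hom E B I. Cmp E b x = a))"

definition enough_projectives :: "('o,'m,'e) ecat \<Rightarrow> bool" where
  "enough_projectives E \<longleftrightarrow> (\<forall>C. \<exists>A P x y. conflation E A P C x y \<and> projective E P)"

definition enough_injectives :: "('o,'m,'e) ecat \<Rightarrow> bool" where
  "enough_injectives E \<longleftrightarrow> (\<forall>A. \<exists>I C x y. conflation E A I C x y \<and> injective E I)"

definition subcategory :: "('o,'m,'e) ecat \<Rightarrow> 'o set \<Rightarrow> bool" where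
  "subcategory E X \<longleftrightarrow> (\<exists>Z \<in> X. is_zero_obj E Z) \<and>
     (\<forall>A B b. A \<in> X \<longrightarrow> is_iso E b A B \<longrightarrow> B \<in> X) \<and>
     (\<forall>S A B i1 i2 p1 p2. is_biprod E S A B i1 i2 p1 p2 \<longrightarrow> A \<in> X \<longrightarrow> B \<in> X \<longrightarrow> S \<in> X)"

definition summand_closed :: "('o,'m,'e) ecat \<Rightarrow> 'o set \<Rightarrow> bool" where
  "summand_closed E X \<longleftrightarrow> (\<forall>S A B i1 i2 p1 p2. is_biprod E S A B i1 i2 p1 p2 \<longrightarrow> S \<in> X \<longrightarrow>
      A \<in> X \<and> B \<in> X)"

definition perp1 :: "('o,'m,'e) ecat \<Rightarrow> 'o set \<Rightarrow> 'o set" where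
  "perp1 E X = {B. \<forall>C \<in> X. Ext E C B = {EZero E C B}}"

definition rigid :: "('o,'m,'e) ecat \<Rightarrow> 'o set \<Rightarrow> bool" where
  "rigid E X \<longleftrightarrow> (\<forall>C \<in> X. \<forall>C' \<in> X. Ext E C C' = {EZero E C C'})"

definition cotorsion_pair :: "('o,'m,'e) ecat \<Rightarrow> 'o set \<Rightarrow> 'o set \<Rightarrow> bool" where
  "cotorsion_pair E U V \<longleftrightarrow>
     subcategory E U \<and> subcategory E V \<and> summand_closed E U \<and> summand_closed E V \<and>
     (\<forall>X \<in> U. \<forall>Y \<in> V. Ext E X Y = {EZero E X Y}) \<and>
     (\<forall>B. \<exists>VB UB x y. VB \<in> V \<and> UB \<in> U \<and> conflation E VB UB B x y) \<and>
     (\<forall>B. \<exists>VB UB x y. VB \<in> V \<and> UB \<in> U \<and> conflation E B VB UB x y)"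

definition heart_objs :: "('o,'m,'e) ecat \<Rightarrow> 'o set \<Rightarrow> 'o set \<Rightarrow> 'o set" where
  "heart_objs E U V = {B.
     (\<exists>VB UB x y. VB \<in> V \<and> UB \<in> U \<inter> V \<and> conflation E VB UB B x y) \<and>
     (\<exists>VB UB x y. VB \<in> U \<inter> V \<and> UB \<in> U \<and> conflation E B VB UB x y)}"

definition factors_through :: "('o,'m,'e) ecat \<Rightarrow> 'o set \<Rightarrow> 'o \<Rightarrow> 'o \<Rightarrow> 'm \<Rightarrow> bool" where
  "factors_through E X A B f \<longleftrightarrow>
     (\<exists>Z \<in> X. \<exists>u \<in> Hom E A Z. \<exists>v \<in> Hom E Z B. f = Cmp E v u)"

text \<open>The image of g : A -> B in the ideal quotient Hc / X is an epimorphism there: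
  two morphisms h1, h2 : B -> Y (Y in Hc) with equal classes after composing with g have equal classes.\<close>
definition quotient_epi :: "('o,'m,'e) ecat \<Rightarrow> 'o set \<Rightarrow> 'o set \<Rightarrow> 'o \<Rightarrow> 'o \<Rightarrow> 'm \<Rightarrow> bool" where
  "quotient_epi E Hc X A B g \<longleftrightarrow>
     (\<forall>Y \<in> Hc. \<forall>h1 \<in> Hom E B Y. \<forall>h2 \<in> Hom E B Y.
        factors_through E X A Y (MAdd E (Cmp E h1 g) (MNeg E (Cmp E h2 g))) \<longrightarrow>
        factors_through E X B Y (MAdd E h1 (MNeg E h2)))"

definition Omega :: "('o,'m,'e) ecat \<Rightarrow> 'o set \<Rightarrow> 'o set" where
  "Omega E X = {U. \<exists>P C x y. conflation E U P C x y \<and> projective E P \<and> C \<in> X}"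

end

theory Submission
  imports Defs
begin


locale ET = fixes E :: "('o,'m,'e) ecat" assumes ext: "extriangulated E"
begin

lemma AC: "additive_cat E" using ext by (simp add: extriangulated_def)
lemmas ACs = AC[unfolded additive_cat_def]
lemmas AC1 = ACs[THEN conjunct1]
lemmas AC2 = ACs[THEN conjunct2, THEN conjunct1]
lemmas AC3 = ACs[THEN conjunct2, THEN conjunct2, THEN conjunct1]
lemmas AC4 = ACs[THEN conjunct2, THEN conjunct2, THEN conjunct2, THEN conjunct1]
lemmas AC5 = ACs[THEN conjunct2, THEN conjunct2, THEN conjunct2, THEN conjunct2, THEN conjunct1]
lemmas AC6 = ACs[THEN conjunct2, THEN conjunct2, THEN conjunct2, THEN conjunct2, THEN conjunct2, THEN conjunct1]
lemmas AC7 = ACs[THEN conjunct2, THEN conjunct2, THEN conjunct2, THEN conjunct2, THEN conjunct2, THEN conjunct2, THEN conjunct1]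
lemmas AC8 = ACs[THEN conjunct2, THEN conjunct2, THEN conjunct2, THEN conjunct2, THEN conjunct2, THEN conjunct2, THEN conjunct2, THEN conjunct1]
lemmas AC9 = ACs[THEN conjunct2, THEN conjunct2, THEN conjunct2, THEN conjunct2, THEN conjunct2, THEN conjunct2, THEN conjunct2, THEN conjunct2, THEN conjunct1]
lemmas AC10 = ACs[THEN conjunct2, THEN conjunct2, THEN conjunct2, THEN conjunct2, THEN conjunct2, THEN conjunct2, THEN conjunct2, THEN conjunct2, THEN conjunct2]

lemma hom_uniq: "f \<in> Hom E A B \<Longrightarrow> f \<in> Hom E A' B' \<Longrightarrow> A = A' \<and> B = B'"
  using AC1 by blast
lemma comp_hom[intro]: "f \<in> Hom E A B \<Longrightarrow> g \<in> Hom E B D \<Longrightarrow> Cmp E g f \<in> Hom E A D"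
  using AC2 by blast
lemma assoc: "f \<in> Hom E A B \<Longrightarrow> g \<in> Hom E B D \<Longrightarrow> h \<in> Hom E D F \<Longrightarrow>
        Cmp E h (Cmp E g f) = Cmp E (Cmp E h g) f"
  using AC3 by blast
lemma id_hom[intro]: "Idn E A \<in> Hom E A A"
  using AC4 by blast
lemma id_r: "f \<in> Hom E A B \<Longrightarrow> Cmp E f (Idn E A) = f"
  using AC5 by blast
lemma id_l: "f \<in> Hom E A B \<Longrightarrow> Cmp E (Idn E B) f = f"
  using AC5 by blast
lemma zero_hom[intro]: "MZero E A B \<in> Hom E A B"
  using AC6 by blast
lemma add_hom[intro]: "f \<in> Hom E A B \<Longrightarrow> g \<in> Hom E A B \<Longrightarrow> MAdd E f g \<in> Hom E A B"
  using AC6 by blast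
lemma add_comm: "f \<in> Hom E A B \<Longrightarrow> g \<in> Hom E A B \<Longrightarrow> MAdd E f g = MAdd E g f"
  using AC6 by blast
lemma add_assoc: "f \<in> Hom E A B \<Longrightarrow> g \<in> Hom E A B \<Longrightarrow> h \<in> Hom E A B \<Longrightarrow>
   MAdd E (MAdd E f g) h = MAdd E f (MAdd E g h)"
  using AC6 by blast
lemma neg_hom[intro]: "f \<in> Hom E A B \<Longrightarrow> MNeg E f \<in> Hom E A B"
  using AC6 by blast
lemma add_zero: "f \<in> Hom E A B \<Longrightarrow> MAdd E f (MZero E A B) = f"
  using AC6 by blast
lemma add_neg: "f \<in> Hom E A B \<Longrightarrow> MAdd E f (MNeg E f) = MZero E A B"
  using AC6 by blast
lemma distl: "f1 \<in> Hom E A B \<Longrightarrow> f2 \<in> Hom E A B \<Longrightarrow> g \<in> Hom E B D \<Longrightarrow>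
        Cmp E g (MAdd E f1 f2) = MAdd E (Cmp E g f1) (Cmp E g f2)"
  using AC7 by blast
lemma distr: "f \<in> Hom E A B \<Longrightarrow> g1 \<in> Hom E B D \<Longrightarrow> g2 \<in> Hom E B D \<Longrightarrow>
        Cmp E (MAdd E g1 g2) f = MAdd E (Cmp E g1 f) (Cmp E g2 f)"
  using AC8 by blast
lemma zero_ex: "\<exists>Z. is_zero_obj E Z"
  using AC9 by blast
lemma biprod_ex: "\<exists>S i1 i2 p1 p2. is_biprod E S A B i1 i2 p1 p2"
  using AC10 by blast

lemma zero_l: "f \<in> Hom E A B \<Longrightarrow> MAdd E (MZero E A B) f = f"
  by (metis add_comm add_zero zero_hom)

lemma idem_zero: assumes "x \<in> Hom E A B" "MAdd E x x = x" shows "x = MZero E A B"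
proof -
  have n: "MNeg E x \<in> Hom E A B" using assms(1) by (rule neg_hom)
  have "MZero E A B = MAdd E x (MNeg E x)" using assms add_neg by metis
  also have "\<dots> = MAdd E (MAdd E x x) (MNeg E x)" using assms by simp
  also have "\<dots> = MAdd E x (MAdd E x (MNeg E x))" using assms n add_assoc by blast
  also have "\<dots> = x" using assms add_neg add_zero by metis
  finally show ?thesis by simp
qed

lemma comp_zero_l: "f \<in> Hom E A B \<Longrightarrow> Cmp E (MZero E B D) f = MZero E A D"
  by (metis add_zero comp_hom distr idem_zero zero_hom)
lemma comp_zero_r: "g \<in> Hom E B D \<Longrightarrow> Cmp E g (MZero E A B) = MZero E A D"
  by (metis add_zero comp_hom distl idem_zero zero_hom)

lemma neg_add: "f \<in> Hom E A B \<Longrightarrow> MAdd E (MNeg E f) f = MZero E A B"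
  by (metis add_comm add_neg neg_hom)

lemma zero_obj_hom: "is_zero_obj E Z \<Longrightarrow> f \<in> Hom E A Z \<Longrightarrow> f = MZero E A Z"
  unfolding is_zero_obj_def by blast
lemma zero_obj_hom2: "is_zero_obj E Z \<Longrightarrow> f \<in> Hom E Z A \<Longrightarrow> f = MZero E Z A"
  unfolding is_zero_obj_def by blast

lemma biprod_zr: assumes "is_zero_obj E Z"
  shows "is_biprod E A A Z (Idn E A) (MZero E Z A) (Idn E A) (MZero E A Z)"
proof -
  have "Idn E Z = MZero E Z Z" using assms zero_obj_hom by blast
  then show ?thesis unfolding is_biprod_def
    by (simp add: id_hom zero_hom id_l id_r comp_zero_l comp_zero_r add_zero id_l[OF id_hom] comp_zero_l[OF zero_hom] add_zero[OF id_hom])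
qed

lemma biprod_zl: assumes "is_zero_obj E Z"
  shows "is_biprod E A Z A (MZero E Z A) (Idn E A) (MZero E A Z) (Idn E A)"
proof -
  have "Idn E Z = MZero E Z Z" using assms zero_obj_hom by blast
  then show ?thesis unfolding is_biprod_def
    by (simp add: id_hom zero_hom id_l id_r comp_zero_l comp_zero_r zero_l id_l[OF id_hom] comp_zero_l[OF zero_hom] zero_l[OF id_hom])
qed

lemma biprod_swap: "is_biprod E S A B i1 i2 p1 p2 \<Longrightarrow> is_biprod E S B A i2 i1 p2 p1"
  unfolding is_biprod_def by (metis add_comm comp_hom)

end


context ET begin

lemma BEs: "biadditive_ext E" using ext by (simp add: extriangulated_def)
lemmas BE = BEs[unfolded biadditive_ext_def]
lemmas BE1 = BE[THEN conjunct1]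
lemmas BE2 = BE[THEN conjunct2, THEN conjunct1]
lemmas BE3 = BE[THEN conjunct2, THEN conjunct2, THEN conjunct1]
lemmas BE4 = BE[THEN conjunct2, THEN conjunct2, THEN conjunct2, THEN conjunct1]
lemmas BE5 = BE[THEN conjunct2, THEN conjunct2, THEN conjunct2, THEN conjunct2, THEN conjunct1]
lemmas BE6 = BE[THEN conjunct2, THEN conjunct2, THEN conjunct2, THEN conjunct2, THEN conjunct2, THEN conjunct1]
lemmas BE7 = BE[THEN conjunct2, THEN conjunct2, THEN conjunct2, THEN conjunct2, THEN conjunct2, THEN conjunct2, THEN conjunct1]
lemmas BE8 = BE[THEN conjunct2, THEN conjunct2, THEN conjunct2, THEN conjunct2, THEN conjunct2, THEN conjunct2, THEN conjunct2, THEN conjunct1]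
lemmas BE9 = BE[THEN conjunct2, THEN conjunct2, THEN conjunct2, THEN conjunct2, THEN conjunct2, THEN conjunct2, THEN conjunct2, THEN conjunct2, THEN conjunct1]
lemmas BE10 = BE[THEN conjunct2, THEN conjunct2, THEN conjunct2, THEN conjunct2, THEN conjunct2, THEN conjunct2, THEN conjunct2, THEN conjunct2, THEN conjunct2, THEN conjunct1]
lemmas BE11 = BE[THEN conjunct2, THEN conjunct2, THEN conjunct2, THEN conjunct2, THEN conjunct2, THEN conjunct2, THEN conjunct2, THEN conjunct2, THEN conjunct2, THEN conjunct2, THEN conjunct1]
lemmas BE12 = BE[THEN conjunct2, THEN conjunct2, THEN conjunct2, THEN conjunct2, THEN conjunct2, THEN conjunct2, THEN conjunct2, THEN conjunct2, THEN conjunct2, THEN conjunct2, THEN conjunct2]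

lemma ezero_ext[intro]: "EZero E C A \<in> Ext E C A" using BE2 by blast
lemma eadd_ext[intro]: "d \<in> Ext E C A \<Longrightarrow> e \<in> Ext E C A \<Longrightarrow> EAdd E d e \<in> Ext E C A" using BE2 by blast
lemma eadd_comm: "d \<in> Ext E C A \<Longrightarrow> e \<in> Ext E C A \<Longrightarrow> EAdd E d e = EAdd E e d" using BE2 by blast
lemma eadd_assoc: "d \<in> Ext E C A \<Longrightarrow> e \<in> Ext E C A \<Longrightarrow> f \<in> Ext E C A \<Longrightarrow>
   EAdd E (EAdd E d e) f = EAdd E d (EAdd E e f)" using BE2 by blast
lemma eneg_ext[intro]: "d \<in> Ext E C A \<Longrightarrow> ENeg E d \<in> Ext E C A" using BE2 by blast
lemma eadd_zero: "d \<in> Ext E C A \<Longrightarrow> EAdd E d (EZero E C A) = d" using BE2 by blast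
lemma eadd_neg: "d \<in> Ext E C A \<Longrightarrow> EAdd E d (ENeg E d) = EZero E C A" using BE2 by blast
lemma push_ext[intro]: "a \<in> Hom E A A' \<Longrightarrow> d \<in> Ext E C A \<Longrightarrow> Push E a d \<in> Ext E C A'" using BE3 by blast
lemma pull_ext[intro]: "c \<in> Hom E C' C \<Longrightarrow> d \<in> Ext E C A \<Longrightarrow> Pull E c d \<in> Ext E C' A" using BE4 by blast
lemma push_id: "d \<in> Ext E C A \<Longrightarrow> Push E (Idn E A) d = d" using BE5 by blast
lemma pull_id: "d \<in> Ext E C A \<Longrightarrow> Pull E (Idn E C) d = d" using BE5 by blast
lemma push_comp: "a \<in> Hom E A A' \<Longrightarrow> a' \<in> Hom E A' A'' \<Longrightarrow> d \<in> Ext E C A \<Longrightarrow>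
        Push E (Cmp E a' a) d = Push E a' (Push E a d)" using BE6 by blast
lemma pull_comp: "c \<in> Hom E C' C \<Longrightarrow> c' \<in> Hom E C'' C' \<Longrightarrow> d \<in> Ext E C A \<Longrightarrow>
        Pull E (Cmp E c c') d = Pull E c' (Pull E c d)" using BE7 by blast
lemma push_pull: "a \<in> Hom E A A' \<Longrightarrow> c \<in> Hom E C' C \<Longrightarrow> d \<in> Ext E C A \<Longrightarrow>
        Push E a (Pull E c d) = Pull E c (Push E a d)" using BE8 by blast
lemma push_eadd: "a \<in> Hom E A A' \<Longrightarrow> d \<in> Ext E C A \<Longrightarrow> e \<in> Ext E C A \<Longrightarrow>
        Push E a (EAdd E d e) = EAdd E (Push E a d) (Push E a e)" using BE9 by blast
lemma push_madd: "a1 \<in> Hom E A A' \<Longrightarrow> a2 \<in> Hom E A A' \<Longrightarrow> d \<in> Ext E C A \<Longrightarrow>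
        Push E (MAdd E a1 a2) d = EAdd E (Push E a1 d) (Push E a2 d)" using BE10 by blast
lemma pull_eadd: "c \<in> Hom E C' C \<Longrightarrow> d \<in> Ext E C A \<Longrightarrow> e \<in> Ext E C A \<Longrightarrow>
        Pull E c (EAdd E d e) = EAdd E (Pull E c d) (Pull E c e)" using BE11 by blast

lemma pull_madd: "c1 \<in> Hom E C' C \<Longrightarrow> c2 \<in> Hom E C' C \<Longrightarrow> d \<in> Ext E C A \<Longrightarrow>
        Pull E (MAdd E c1 c2) d = EAdd E (Pull E c1 d) (Pull E c2 d)" using BE12 by blast

lemma eidem_zero: assumes "x \<in> Ext E C A" "EAdd E x x = x" shows "x = EZero E C A"
proof -
  have n: "ENeg E x \<in> Ext E C A" using assms(1) by (rule eneg_ext)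
  have "EZero E C A = EAdd E x (ENeg E x)" using assms eadd_neg by metis
  also have "\<dots> = EAdd E (EAdd E x x) (ENeg E x)" using assms by simp
  also have "\<dots> = EAdd E x (EAdd E x (ENeg E x))" using assms n eadd_assoc by blast
  also have "\<dots> = x" using assms eadd_neg eadd_zero by metis
  finally show ?thesis by simp
qed

lemma push_zero_mor: assumes "d \<in> Ext E C A" shows "Push E (MZero E A A') d = EZero E C A'"
proof -
  have "Push E (MZero E A A') d = Push E (MAdd E (MZero E A A') (MZero E A A')) d"
    by (simp add: add_zero[OF zero_hom])
  also have "\<dots> = EAdd E (Push E (MZero E A A') d) (Push E (MZero E A A') d)"
    using assms push_madd zero_hom by blast
  finally show ?thesis using eidem_zero push_ext assms zero_hom by metis
qed

lemma pull_zero_ext: assumes "c \<in> Hom E C' C" shows "Pull E c (EZero E C A) = EZero E C' A"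
proof -
  have "Pull E c (EZero E C A) = Pull E c (EAdd E (EZero E C A) (EZero E C A))"
    by (simp add: eadd_zero[OF ezero_ext])
  also have "\<dots> = EAdd E (Pull E c (EZero E C A)) (Pull E c (EZero E C A))"
    using assms pull_eadd ezero_ext by blast
  finally show ?thesis using eidem_zero pull_ext assms ezero_ext by metis
qed

lemma push_zero_ext: assumes "a \<in> Hom E A A'" shows "Push E a (EZero E C A) = EZero E C A'"
proof -
  have "Push E a (EZero E C A) = Push E a (EAdd E (EZero E C A) (EZero E C A))"
    by (simp add: eadd_zero[OF ezero_ext])
  also have "\<dots> = EAdd E (Push E a (EZero E C A)) (Push E a (EZero E C A))"
    using assms push_eadd ezero_ext by blast
  finally show ?thesis using eidem_zero push_ext assms ezero_ext by metis
qed

end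


context ET begin

lemma RAs: "realization_ax E" using ext by (simp add: extriangulated_def)
lemmas RA = RAs[unfolded realization_ax_def]
lemmas RA1 = RA[THEN conjunct1]
lemmas RA2 = RA[THEN conjunct2, THEN conjunct1]
lemmas RA3 = RA[THEN conjunct2, THEN conjunct2, THEN conjunct1]
lemmas RA4 = RA[THEN conjunct2, THEN conjunct2, THEN conjunct2, THEN conjunct1]
lemmas RA5 = RA[THEN conjunct2, THEN conjunct2, THEN conjunct2, THEN conjunct2, THEN conjunct1]
lemmas RA6 = RA[THEN conjunct2, THEN conjunct2, THEN conjunct2, THEN conjunct2, THEN conjunct2]

lemma real_ext: "Real E A B C x y d \<Longrightarrow> d \<in> Ext E C A" using RA1[rule_format] by blast
lemma real_x: "Real E A B C x y d \<Longrightarrow> x \<in> Hom E A B" using RA1[rule_format] by blast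
lemma real_y: "Real E A B C x y d \<Longrightarrow> y \<in> Hom E B C" using RA1[rule_format] by blast
lemma real_ex: "d \<in> Ext E C A \<Longrightarrow> \<exists>B x y. Real E A B C x y d" by (rule RA2[rule_format])
lemma real_iso: "Real E A B C x y d \<Longrightarrow> is_iso E b B B' \<Longrightarrow> Cmp E b x = x' \<Longrightarrow> Cmp E y' b = y
   \<Longrightarrow> Real E A B' C x' y' d" using RA3[rule_format] by blast
lemma real_mor: "Real E A B C x y d \<Longrightarrow> Real E A' B' C' x' y' d' \<Longrightarrow>
        a \<in> Hom E A A' \<Longrightarrow> c \<in> Hom E C C' \<Longrightarrow> Push E a d = Pull E c d' \<Longrightarrow>
        (\<exists>b \<in> Hom E B B'. Cmp E b x = Cmp E x' a \<and> Cmp E y' b = Cmp E c y)" by (rule RA4[rule_format])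
lemma real_split: "is_biprod E S A C i1 i2 p1 p2 \<Longrightarrow> Real E A S C i1 p2 (EZero E C A)"
  by (rule RA5[rule_format])
lemma real_sum: "Real E A B C x y d \<Longrightarrow> Real E A' B' C' x' y' d' \<Longrightarrow>
        is_biprod E SA A A' ia1 ia2 pa1 pa2 \<Longrightarrow>
        is_biprod E SB B B' ib1 ib2 pb1 pb2 \<Longrightarrow>
        is_biprod E SC C C' ic1 ic2 pc1 pc2 \<Longrightarrow>
        Real E SA SB SC
          (MAdd E (Cmp E ib1 (Cmp E x pa1)) (Cmp E ib2 (Cmp E x' pa2)))
          (MAdd E (Cmp E ic1 (Cmp E y pb1)) (Cmp E ic2 (Cmp E y' pb2)))
          (EAdd E (Push E ia1 (Pull E pc1 d)) (Push E ia2 (Pull E pc2 d')))"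
  by (rule RA6[rule_format])

lemma ET3s: "ET3_ax E" using ext by (simp add: extriangulated_def)
lemmas ET3u = ET3s[unfolded ET3_ax_def]
lemma ET3a: "Real E A B C x y d \<Longrightarrow> Real E A' B' C' x' y' d' \<Longrightarrow>
        a \<in> Hom E A A' \<Longrightarrow> b \<in> Hom E B B' \<Longrightarrow> Cmp E b x = Cmp E x' a \<Longrightarrow>
        (\<exists>c \<in> Hom E C C'. Cmp E c y = Cmp E y' b \<and> Push E a d = Pull E c d')"
  by (rule ET3u[THEN conjunct1, rule_format])
lemma ET3b: "Real E A B C x y d \<Longrightarrow> Real E A' B' C' x' y' d' \<Longrightarrow>
        b \<in> Hom E B B' \<Longrightarrow> c \<in> Hom E C C' \<Longrightarrow> Cmp E c y = Cmp E y' b \<Longrightarrow>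
        (\<exists>a \<in> Hom E A A'. Cmp E b x = Cmp E x' a \<and> Push E a d = Pull E c d')"
  by (rule ET3u[THEN conjunct2, rule_format])
lemma ET4s: "ET4_ax E" using ext by (simp add: extriangulated_def)
lemmas ET4u = ET4s[unfolded ET4_ax_def]
lemma ET4b: "Real E D B A f' f d \<Longrightarrow> Real E F C B g' g d' \<Longrightarrow>
        (\<exists>X h' dd e d''.
           Real E X C A h' (Cmp E f g) d'' \<and>
           Real E F X D e dd (Pull E f' d') \<and>
           Push E dd d'' = d \<and> Pull E f d'' = Push E e d' \<and>
           Cmp E g h' = Cmp E f' dd \<and> Cmp E h' e = g')"
  by (rule ET4u[THEN conjunct2, rule_format])

lemma split_r: "is_zero_obj E Z \<Longrightarrow> Real E W W Z (Idn E W) (MZero E W Z) (EZero E Z W)"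
  using real_split[OF biprod_zr] by blast
lemma split_l: "is_zero_obj E Z \<Longrightarrow> Real E Z W W (MZero E Z W) (Idn E W) (EZero E W Z)"
  using real_split[OF biprod_zl] by blast

lemma extend: assumes r: "Real E A B C x y d" and f: "f \<in> Hom E A W"
  and z: "Push E f d = EZero E C W"
  shows "\<exists>p\<in>Hom E B W. Cmp E p x = f"
proof -
  obtain Z where Z: "is_zero_obj E Z" using zero_ex by blast
  have "Push E f d = Pull E (MZero E C Z) (EZero E Z W)" using z pull_zero_ext zero_hom by metis
  from real_mor[OF r split_r[OF Z] f zero_hom this]
  obtain b where "b \<in> Hom E B W" "Cmp E b x = Cmp E (Idn E W) f" by blast
  then show ?thesis using id_l f by metis
qed

lemma proj_ext: assumes r: "Real E X P C x y eps" and P: "projective E P"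
  and eta: "eta \<in> Ext E C A"
  shows "\<exists>a\<in>Hom E X A. Push E a eps = eta"
proof -
  obtain W x2 y2 where r2: "Real E A W C x2 y2 eta" using real_ex[OF eta] by blast
  have "conflation E A W C x2 y2" using r2 unfolding conflation_def by blast
  then obtain w where w: "w \<in> Hom E P W" "Cmp E y2 w = y"
    using P real_y[OF r] unfolding projective_def by blast
  have "Cmp E (Idn E C) y = Cmp E y2 w" using w id_l real_y[OF r] by metis
  from ET3b[OF r r2 w(1) id_hom this]
  obtain a where "a \<in> Hom E X A" "Push E a eps = Pull E (Idn E C) eta" by blast
  then show ?thesis using pull_id eta by metis
qed

end


context ET begin

lemma biprod_homs: "is_biprod E S A B i1 i2 p1 p2 \<Longrightarrow>
  i1 \<in> Hom E A S \<and> i2 \<in> Hom E B S \<and> p1 \<in> Hom E S A \<and> p2 \<in> Hom E S B"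
  unfolding is_biprod_def by blast

lemma shear_mul: assumes a: "a \<in> Hom E S S" and b: "b \<in> Hom E S S" and ab: "Cmp E a b = MZero E S S"
  shows "Cmp E (MAdd E (Idn E S) a) (MAdd E (Idn E S) b) = MAdd E (Idn E S) (MAdd E a b)"
proof -
  have ia: "MAdd E (Idn E S) a \<in> Hom E S S" using a by blast
  have "Cmp E (MAdd E (Idn E S) a) (MAdd E (Idn E S) b)
     = MAdd E (Cmp E (MAdd E (Idn E S) a) (Idn E S)) (Cmp E (MAdd E (Idn E S) a) b)"
    using distl[OF id_hom b ia] .
  also have "\<dots> = MAdd E (MAdd E (Idn E S) a) (MAdd E (Cmp E (Idn E S) b) (Cmp E a b))"
    using id_r[OF ia] distr[OF b id_hom a] by simp
  also have "\<dots> = MAdd E (MAdd E (Idn E S) a) b" using ab id_l[OF b] add_zero[OF b] by simp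
  also have "\<dots> = MAdd E (Idn E S) (MAdd E a b)" using add_assoc[OF id_hom a b] .
  finally show ?thesis .
qed

lemma nsum: assumes i: "i \<in> Hom E C S" and p: "p \<in> Hom E S U" and s: "s \<in> Hom E U C" and t: "t \<in> Hom E U C"
  shows "MAdd E (Cmp E i (Cmp E s p)) (Cmp E i (Cmp E t p)) = Cmp E i (Cmp E (MAdd E s t) p)"
proof -
  have "MAdd E (Cmp E i (Cmp E s p)) (Cmp E i (Cmp E t p)) = Cmp E i (MAdd E (Cmp E s p) (Cmp E t p))"
    using distl[OF comp_hom[OF p s] comp_hom[OF p t] i] by simp
  also have "\<dots> = Cmp E i (Cmp E (MAdd E s t) p)" using distr[OF p s t] by simp
  finally show ?thesis .
qed

lemma nprod: assumes i: "i \<in> Hom E C S" and p: "p \<in> Hom E S U" and s: "s \<in> Hom E U C" and t: "t \<in> Hom E U C"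
  and z: "Cmp E p i = MZero E C U"
  shows "Cmp E (Cmp E i (Cmp E s p)) (Cmp E i (Cmp E t p)) = MZero E S S"
proof -
  have tp: "Cmp E i (Cmp E t p) \<in> Hom E S S" using i p t by blast
  have sp: "Cmp E s p \<in> Hom E S C" using p s by blast
  have tp2: "Cmp E t p \<in> Hom E S C" using p t by blast
  have "Cmp E (Cmp E i (Cmp E s p)) (Cmp E i (Cmp E t p)) = Cmp E i (Cmp E (Cmp E s p) (Cmp E i (Cmp E t p)))"
    using assoc[OF tp sp i] by simp
  also have "Cmp E (Cmp E s p) (Cmp E i (Cmp E t p)) = Cmp E s (Cmp E p (Cmp E i (Cmp E t p)))"
    using assoc[OF tp p s] by simp
  also have "Cmp E p (Cmp E i (Cmp E t p)) = Cmp E (Cmp E p i) (Cmp E t p)"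
    using assoc[OF tp2 i p] .
  also have "\<dots> = MZero E S U" using z comp_zero_l[OF tp2] by simp
  finally show ?thesis using comp_zero_r[OF s] comp_zero_r[OF i] by simp
qed

lemma rigid_perp: "rigid E Cc \<Longrightarrow> X \<in> Cc \<Longrightarrow> X \<in> perp1 E Cc"
  unfolding rigid_def perp1_def by blast

lemma heart_auto1: assumes cp: "cotorsion_pair E Cc (perp1 E Cc)" and rg: "rigid E Cc"
  shows "\<exists>VB UB x y. VB \<in> perp1 E Cc \<and> UB \<in> Cc \<inter> perp1 E Cc \<and> conflation E VB UB X x y"
  using cp rg rigid_perp unfolding cotorsion_pair_def by blast

lemma heart_ext: assumes cp: "cotorsion_pair E Cc (perp1 E Cc)" and rg: "rigid E Cc"
  and rz: "Real E B C0 C1 i j zeta" and C0: "C0 \<in> Cc" and C1: "C1 \<in> Cc" and U: "U \<in> Cc"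
  and u: "u \<in> Hom E U C1"
  shows "\<exists>Y e dd. Real E B Y U e dd (Pull E u zeta) \<and> Y \<in> heart_objs E Cc (perp1 E Cc)"
proof -
  obtain Z where Z: "is_zero_obj E Z" using zero_ex by blast
  obtain SB ib1 ib2 pb1 pb2 where SB: "is_biprod E SB C0 U ib1 ib2 pb1 pb2" using biprod_ex by blast
  obtain SC ic1 ic2 pc1 pc2 where SC: "is_biprod E SC C1 U ic1 ic2 pc1 pc2" using biprod_ex by blast
  have ic1: "ic1 \<in> Hom E C1 SC" and ic2: "ic2 \<in> Hom E U SC" and pc1: "pc1 \<in> Hom E SC C1"
    and pc2: "pc2 \<in> Hom E SC U" using biprod_homs[OF SC] by auto
  have zeta: "zeta \<in> Ext E C1 B" using real_ext[OF rz] .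
  from real_sum[OF rz split_l[OF Z, of U] biprod_zr[OF Z, of B] SB SC]
  obtain k0 D0 where r0: "Real E B SB SC k0 D0
     (EAdd E (Push E (Idn E B) (Pull E pc1 zeta)) (Push E (MZero E Z B) (Pull E pc2 (EZero E U Z))))"
    by blast
  have d0: "EAdd E (Push E (Idn E B) (Pull E pc1 zeta)) (Push E (MZero E Z B) (Pull E pc2 (EZero E U Z)))
     = Pull E pc1 zeta"
  proof -
    have e1: "Pull E pc1 zeta \<in> Ext E SC B" using pc1 zeta by blast
    have "Pull E pc2 (EZero E U Z) = EZero E SC Z" using pull_zero_ext[OF pc2] .
    moreover have "Push E (MZero E Z B) (EZero E SC Z) = EZero E SC B" using push_zero_ext[OF zero_hom] .
    ultimately show ?thesis using push_id[OF e1] eadd_zero[OF e1] by simp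
  qed
  define n where "n = Cmp E ic1 (Cmp E u pc2)"
  define n' where "n' = Cmp E ic1 (Cmp E (MNeg E u) pc2)"
  have nu: "MNeg E u \<in> Hom E U C1" using u by blast
  have n: "n \<in> Hom E SC SC" unfolding n_def using ic1 pc2 u by blast
  have n': "n' \<in> Hom E SC SC" unfolding n'_def using ic1 pc2 nu by blast
  have z21: "Cmp E pc2 ic1 = MZero E C1 U" using SC unfolding is_biprod_def by blast
  have z12: "Cmp E pc1 ic2 = MZero E U C1" using SC unfolding is_biprod_def by blast
  have o11: "Cmp E pc1 ic1 = Idn E C1" using SC unfolding is_biprod_def by blast
  have o22: "Cmp E pc2 ic2 = Idn E U" using SC unfolding is_biprod_def by blast
  have nn0: "MAdd E n n' = MZero E SC SC"
  proof -
    have "MAdd E n n' = Cmp E ic1 (Cmp E (MAdd E u (MNeg E u)) pc2)"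
      unfolding n_def n'_def using nsum[OF ic1 pc2 u nu] .
    also have "\<dots> = MZero E SC SC" using add_neg[OF u] comp_zero_l[OF pc2] comp_zero_r[OF ic1] by simp
    finally show ?thesis .
  qed
  have nn0': "MAdd E n' n = MZero E SC SC" using nn0 add_comm[OF n n'] by simp
  define phi where "phi = MAdd E (Idn E SC) n"
  define phi' where "phi' = MAdd E (Idn E SC) n'"
  have phi: "phi \<in> Hom E SC SC" unfolding phi_def using n by blast
  have phi': "phi' \<in> Hom E SC SC" unfolding phi'_def using n' by blast
  have inv1: "Cmp E phi' phi = Idn E SC"
    unfolding phi_def phi'_def
    using shear_mul[OF n' n] nprod[OF ic1 pc2 nu u z21] nn0' add_zero[OF id_hom]
    unfolding n_def n'_def by simp
  have inv2: "Cmp E phi phi' = Idn E SC"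
    unfolding phi_def phi'_def
    using shear_mul[OF n n'] nprod[OF ic1 pc2 u nu z21] nn0 add_zero[OF id_hom]
    unfolding n_def n'_def by simp
  have iso: "is_iso E phi SC SC" unfolding is_iso_def using phi phi' inv1 inv2 by blast
  define x' where "x' = Cmp E phi ic2"
  define y' where "y' = Cmp E pc1 phi'"
  have yphi: "Cmp E y' phi = pc1" unfolding y'_def using assoc[OF phi phi' pc1] inv1 id_r[OF pc1] by simp
  have rs: "Real E U SC C1 ic2 pc1 (EZero E C1 U)" using real_split[OF biprod_swap[OF SC]] .
  have r1: "Real E U SC C1 x' y' (EZero E C1 U)" using real_iso[OF rs iso x'_def[symmetric] yphi] .
  have x': "x' \<in> Hom E U SC" unfolding x'_def using phi ic2 by blast
  have px: "Cmp E pc1 x' = u"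
  proof -
    have "x' = MAdd E ic2 (Cmp E n ic2)" unfolding x'_def phi_def using distr[OF ic2 id_hom n] id_l[OF ic2] by simp
    also have "Cmp E n ic2 = Cmp E ic1 u"
      unfolding n_def using assoc[OF ic2 pc2 u] o22 id_r[OF u] assoc[OF ic2 comp_hom[OF pc2 u] ic1] by simp
    finally have "Cmp E pc1 x' = MAdd E (Cmp E pc1 ic2) (Cmp E pc1 (Cmp E ic1 u))"
      using distl[OF ic2 comp_hom[OF u ic1] pc1] by simp
    also have "\<dots> = u" using z12 assoc[OF u ic1 pc1] o11 id_l[OF u] zero_l[OF u] by simp
    finally show ?thesis .
  qed
  from ET4b[OF r1 r0[unfolded d0]]
  obtain Y h' dd e d'' where r2: "Real E Y SB C1 h' (Cmp E y' D0) d''"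
    and r3: "Real E B Y U e dd (Pull E x' (Pull E pc1 zeta))" by blast
  have "Pull E x' (Pull E pc1 zeta) = Pull E u zeta" using pull_comp[OF pc1 x' zeta] px by simp
  with r3 have r3': "Real E B Y U e dd (Pull E u zeta)" by simp
  have "subcategory E Cc" using cp unfolding cotorsion_pair_def by blast
  then have "\<forall>S A B i1 i2 p1 p2. is_biprod E S A B i1 i2 p1 p2 \<longrightarrow> A \<in> Cc \<longrightarrow> B \<in> Cc \<longrightarrow> S \<in> Cc"
    unfolding subcategory_def by blast
  then have SBin: "SB \<in> Cc" using SB C0 U by blast
  have "Y \<in> heart_objs E Cc (perp1 E Cc)"
    unfolding heart_objs_def
    using heart_auto1[OF cp rg, of Y] SBin rigid_perp[OF rg SBin] C1 r2 unfolding conflation_def by blast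
  with r3' show ?thesis by blast
qed

end


context ET begin

lemma neg_zero: "MNeg E (MZero E A B) = MZero E A B"
  using neg_add[OF zero_hom] add_zero[OF neg_hom[OF zero_hom]] by simp

lemma main:
  assumes cp: "cotorsion_pair E Cc (perp1 E Cc)" and rg: "rigid E Cc"
    and A: "A \<in> heart_objs E Cc (perp1 E Cc)" and B: "B \<in> heart_objs E Cc (perp1 E Cc)"
    and g: "g \<in> Hom E A B" and dg: "deflation E A B g"
    and qe: "quotient_epi E (heart_objs E Cc (perp1 E Cc)) Cc A B g"
    and X: "X \<in> Omega E Cc" and b: "b \<in> Hom E X B"
  shows "\<exists>a \<in> Hom E X A. Cmp E g a = b"
proof -
  have rgC: "\<And>C C'. C \<in> Cc \<Longrightarrow> C' \<in> Cc \<Longrightarrow> Ext E C C' = {EZero E C C'}"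
    using rg unfolding rigid_def by blast
  obtain CA UA al be where CA: "CA \<in> Cc" and UA: "UA \<in> Cc" and "conflation E A CA UA al be"
    using A unfolding heart_objs_def by blast
  then obtain th where rth: "Real E A CA UA al be th" unfolding conflation_def by blast
  obtain C0 C1 i j where C0: "C0 \<in> Cc" and C1: "C1 \<in> Cc" and "conflation E B C0 C1 i j"
    using B unfolding heart_objs_def by blast
  then obtain ze where rze: "Real E B C0 C1 i j ze" unfolding conflation_def by blast
  have th: "th \<in> Ext E UA A" using real_ext[OF rth] .
  have ze: "ze \<in> Ext E C1 B" using real_ext[OF rze] .
  have al: "al \<in> Hom E A CA" using real_x[OF rth] .
  have i: "i \<in> Hom E B C0" using real_x[OF rze] .
  have ig: "Cmp E i g \<in> Hom E A C0" using g i by blast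
  have "Push E (Cmp E i g) th \<in> Ext E UA C0" using ig th by blast
  then have "Push E (Cmp E i g) th = EZero E UA C0" using rgC[OF UA C0] by blast
  from extend[OF rth ig this] obtain w where w: "w \<in> Hom E CA C0" "Cmp E w al = Cmp E i g" by blast
  from ET3a[OF rth rze g w(1) w(2)] obtain u where u: "u \<in> Hom E UA C1" "Push E g th = Pull E u ze"
    by blast
  from heart_ext[OF cp rg rze C0 C1 UA u(1)] obtain Y e dd where
    rY: "Real E B Y UA e dd (Pull E u ze)" and Y: "Y \<in> heart_objs E Cc (perp1 E Cc)" by blast
  have e: "e \<in> Hom E B Y" using real_x[OF rY] .
  have "Push E g th = Pull E (Idn E UA) (Pull E u ze)" using u pull_id[OF real_ext[OF rY]] by simp
  from real_mor[OF rth rY g id_hom this] obtain ga where ga: "ga \<in> Hom E CA Y" "Cmp E ga al = Cmp E e g"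
    by blast
  have "factors_through E Cc A Y (MAdd E (Cmp E e g) (MNeg E (Cmp E (MZero E B Y) g)))"
  proof -
    have "MAdd E (Cmp E e g) (MNeg E (Cmp E (MZero E B Y) g)) = Cmp E ga al"
      using comp_zero_l[OF g] neg_zero add_zero[OF comp_hom[OF g e]] ga(2) by simp
    then show ?thesis unfolding factors_through_def using CA al ga(1) by blast
  qed
  with qe Y e zero_hom have "factors_through E Cc B Y (MAdd E e (MNeg E (MZero E B Y)))"
    unfolding quotient_epi_def by blast
  then obtain C2 u' v' where C2: "C2 \<in> Cc" and u': "u' \<in> Hom E B C2" and v': "v' \<in> Hom E C2 Y"
    and ev: "e = Cmp E v' u'"
    unfolding factors_through_def using neg_zero add_zero[OF e] by auto
  obtain P C x y where "conflation E X P C x y" and P: "projective E P" and C: "C \<in> Cc"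
    using X unfolding Omega_def by blast
  then obtain eps where reps: "Real E X P C x y eps" unfolding conflation_def by blast
  have eps: "eps \<in> Ext E C X" using real_ext[OF reps] .
  have x: "x \<in> Hom E X P" using real_x[OF reps] .
  have ub: "Cmp E u' b \<in> Hom E X C2" using u' b by blast
  have "Push E (Cmp E u' b) eps \<in> Ext E C C2" using ub eps by blast
  then have "Push E (Cmp E u' b) eps = EZero E C C2" using rgC[OF C C2] by blast
  from extend[OF reps ub this] obtain q where q: "q \<in> Hom E P C2" "Cmp E q x = Cmp E u' b" by blast
  have vq: "Cmp E v' q \<in> Hom E P Y" using q v' by blast
  have "Cmp E (Cmp E v' q) x = Cmp E e b"
    using assoc[OF x q(1) v'] q(2) assoc[OF b u' v'] ev by simp
  from ET3a[OF reps rY b vq this] obtain c where c: "c \<in> Hom E C UA"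
    "Push E b eps = Pull E c (Pull E u ze)" by blast
  have "Pull E c (Pull E u ze) = Push E g (Pull E c th)" using u(2) push_pull[OF g c(1) th] by simp
  moreover have eta: "Pull E c th \<in> Ext E C A" using c(1) th by blast
  from proj_ext[OF reps P eta] obtain a0 where a0: "a0 \<in> Hom E X A" "Push E a0 eps = Pull E c th" by blast
  ultimately have pb: "Push E b eps = Push E (Cmp E g a0) eps" using c(2) push_comp[OF a0(1) g eps] by simp
  have ga0: "Cmp E g a0 \<in> Hom E X B" using a0 g by blast
  define d where "d = MAdd E b (MNeg E (Cmp E g a0))"
  have d: "d \<in> Hom E X B" unfolding d_def using b ga0 by blast
  have "Push E d eps = EAdd E (Push E b eps) (Push E (MNeg E (Cmp E g a0)) eps)"
    unfolding d_def using push_madd[OF b neg_hom[OF ga0] eps] .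
  also have "\<dots> = Push E (MAdd E (Cmp E g a0) (MNeg E (Cmp E g a0))) eps"
    using pb push_madd[OF ga0 neg_hom[OF ga0] eps] by simp
  also have "\<dots> = EZero E C B" using add_neg[OF ga0] push_zero_mor[OF eps] by simp
  finally have "Push E d eps = EZero E C B" .
  from extend[OF reps d this] obtain p where p: "p \<in> Hom E P B" "Cmp E p x = d" by blast
  obtain K k where "conflation E K A B k g" using dg unfolding deflation_def by blast
  with P p(1) obtain p' where p': "p' \<in> Hom E P A" "Cmp E g p' = p"
    unfolding projective_def by blast
  have px: "Cmp E p' x \<in> Hom E X A" using p'(1) x by blast
  have "Cmp E g (MAdd E a0 (Cmp E p' x)) = MAdd E (Cmp E g a0) (Cmp E g (Cmp E p' x))"
    using distl[OF a0(1) px g] .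
  also have "Cmp E g (Cmp E p' x) = d" using assoc[OF x p'(1) g] p' p(2) by simp
  also have "MAdd E (Cmp E g a0) d = MAdd E d (Cmp E g a0)" using add_comm[OF ga0 d] .
  also have "\<dots> = MAdd E b (MAdd E (MNeg E (Cmp E g a0)) (Cmp E g a0))"
    unfolding d_def using add_assoc[OF b neg_hom[OF ga0] ga0] .
  also have "\<dots> = b" using neg_add[OF ga0] add_zero[OF b] by simp
  finally show ?thesis using a0(1) px by blast
qed

end

theorem mainTheorem7:
  fixes E :: "('o,'m,'e) ecat" and \<C> :: "'o set" and A B :: 'o and g :: 'm
  assumes "extriangulated E"
    and "enough_projectives E" and "enough_injectives E"
    and "cotorsion_pair E \<C> (perp1 E \<C>)"
    and "rigid E \<C>"
    and "A \<in> heart_objs E \<C> (perp1 E \<C>)" and "B \<in> heart_objs E \<C> (perp1 E \<C>)"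
    and "g \<in> Hom E A B" and "deflation E A B g"
    and "quotient_epi E (heart_objs E \<C> (perp1 E \<C>)) \<C> A B g"
  shows "\<forall>X \<in> Omega E \<C>. \<forall>b \<in> Hom E X B. \<exists>a \<in> Hom E X A. Cmp E g a = b"
proof -
  interpret ET E by unfold_locales (rule assms(1))
  show ?thesis using main[OF assms(4,5,6,7,8,9,10)] by blast
qed

end
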